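(* Let $G$ be one of the triangular lattice, the hexagonal lattice, or the kagome lattice, and let $\Omega_G\subset\mathbb{R}^2$ be the orbit of the Grover walk on $G$ (defined in the context). Then \[ \Omega_G \subseteq \{ (x,y)\in \mathbb{R}^2 \;:\; x^2+s(G)\,xy+y^2\leq r(G) \}, \] where $r(G)=1/2$, $1/6$, $1/4$ and $s(G)=-1$, $+1$, $+1$ when $G$ is the triangular, hexagonal, kagome lattice respectively.
   Context: The Grover walk on a graph acts on $\ell^2$ of the symmetric arcs by $(U\psi)(e)=\sum_{f:\,t(f)=o(e)}\big(\tfrac{2}{\deg o(e)}-\delta_{\bar e,f}\big)\psi(f)$. For a crystal lattice (a $\mathbb{Z}^2$-periodic graph with finite quotient graph $G_0$ having vertex set $V_0$), after Fourier transform in the period lattice with wave vector $k=(k_1,k_2)\in[0,2\pi)^2$ (with respect to a chosen basis of the period lattice), the underlying isotropic random walk becomes a twisted random walk $\hat P_k$ on $\ell^2(V_0)$ whose eigenvalues are written $\cos\gamma_j(k)$, $j=1,\dots,|V_0|$, with $\gamma_j(k)=\arccos(\cdot)\in[0,\pi]$. The orbit of the Grover walk is $\Omega_G=\bigcup_{j}\{\nabla\gamma_j(k)=(\partial\gamma_j/\partial k_1,\partial\gamma_j/\partial k_2)\;:\; k\in[0,2\pi)^2,\ \gamma_j \text{ differentiable at } k\}$. Concretely, with the standard choices of period basis used in the paper, the eigenvalues are: (i) triangular lattice ($|V_0|=1$): $\cos\gamma(k)=\tfrac13(\cos k_1+\cos k_2+\cos(k_1+k_2))$; (ii) hexagonal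 lattice ($|V_0|=2$): $\cos\gamma(k)=\pm\tfrac13|1+e^{ik_1}+e^{ik_2}|$; (iii) kagome lattice ($|V_0|=3$): $\cos\gamma(k)\in\{\tfrac14(1\pm|1+e^{ik_1}+e^{ik_2}|)\}\cup\{-\tfrac12\}$. *)

theory Defs
  imports "HOL-Analysis.Analysis"
begin

datatype lattice = Triangular | Hexagonal | Kagome

text \<open>The eigenvalue branches cos gamma_j(k) of the twisted random walk, as functions
  of the wave vector k = (k1,k2).\<close>
fun eig_branches :: "lattice \<Rightarrow> (real \<times> real \<Rightarrow> real) set" where
  "eig_branches Triangular =
     {\<lambda>(k1,k2). (cos k1 + cos k2 + cos (k1 + k2)) / 3}"
| "eig_branches Hexagonal =
     {\<lambda>(k1,k2). cmod (1 + cis k1 + cis k2) / 3,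
      \<lambda>(k1,k2). - (cmod (1 + cis k1 + cis k2) / 3)}"
| "eig_branches Kagome =
     {\<lambda>(k1,k2). (1 + cmod (1 + cis k1 + cis k2)) / 4,
      \<lambda>(k1,k2). (1 - cmod (1 + cis k1 + cis k2)) / 4,
      \<lambda>_. - 1 / 2}"

definition orbit :: "lattice \<Rightarrow> (real \<times> real) set" where
  "orbit G = {g. \<exists>c \<in> eig_branches G. \<exists>k1 k2.
       0 \<le> k1 \<and> k1 < 2 * pi \<and> 0 \<le> k2 \<and> k2 < 2 * pi \<and>
       ((\<lambda>k. arccos (c k)) has_derivative (\<lambda>h. fst g * fst h + snd g * snd h)) (at (k1, k2))}"

fun r_param :: "lattice \<Rightarrow> real" where
  "r_param Triangular = 1 / 2"
| "r_param Hexagonal = 1 / 6"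
| "r_param Kagome = 1 / 4"

fun s_param :: "lattice \<Rightarrow> real" where
  "s_param Triangular = -1"
| "s_param Hexagonal = 1"
| "s_param Kagome = 1"

end

theory Submission
  imports Defs
begin


lemma grad_zero:
  fixes c :: "real\<times>real \<Rightarrow> real"
  assumes D: "((\<lambda>k. arccos (c k)) has_derivative (\<lambda>h. fst g * fst h + snd g * snd h)) (at k)"
  and B: "\<And>y. -1 \<le> c y \<and> c y \<le> 1"
  and E: "(\<forall>y. c y \<le> c k) \<or> (\<forall>y. c k \<le> c y)"
  shows "g = (0,0)"
proof -
  have m: "(\<forall>y\<in>UNIV. arccos (c y) \<le> arccos (c k)) \<or> (\<forall>y\<in>UNIV. arccos (c k) \<le> arccos (c y))"
    using E B by (meson arccos_le_arccos)
  have "(\<lambda>h. fst g * fst h + snd g * snd h) = (\<lambda>h. 0)"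
    by (rule differential_zero_maxmin[OF _ open_UNIV D m]) simp
  from fun_cong[OF this, of "(1,0)"] fun_cong[OF this, of "(0,1)"] show ?thesis by (cases g) simp
qed

lemma grad_chain:
  fixes c :: "real\<times>real \<Rightarrow> real"
  assumes D: "((\<lambda>k. arccos (c k)) has_derivative (\<lambda>h. fst g * fst h + snd g * snd h)) (at k)"
  and C: "(c has_derivative (\<lambda>h. d1 * fst h + d2 * snd h)) (at k)"
  and c1: "-1 < c k" and c2: "c k < 1"
  and Q: "d1^2 + s * d1 * d2 + d2^2 \<le> r * (1 - (c k)^2)"
  shows "fst g ^ 2 + s * fst g * snd g + snd g ^ 2 \<le> r"
proof -
  have "((\<lambda>k. arccos (c k)) has_derivative (\<lambda>h. (d1 * fst h + d2 * snd h) * inverse (- sqrt (1 - (c k)^2)))) (at k)"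
    by (rule DERIV_compose_FDERIV[OF DERIV_arccos[OF c1 c2] C])
  from has_derivative_unique[OF D this] have e: "(\<lambda>h. fst g * fst h + snd g * snd h) = (\<lambda>h. (d1 * fst h + d2 * snd h) * inverse (- sqrt (1 - (c k)^2)))" .
  define t where "t = sqrt (1 - (c k)^2)"
  have cl: "(c k)^2 < 1" using c1 c2 by (simp add: abs_square_less_1 abs_less_iff)
  have t2: "t^2 = 1 - (c k)^2" unfolding t_def using cl by simp
  have tp: "t > 0" unfolding t_def using cl by simp
  from fun_cong[OF e, of "(1,0)"] fun_cong[OF e, of "(0,1)"]
  have g1: "fst g = - d1 / t" and g2: "snd g = - d2 / t" by (simp_all add: t_def divide_inverse)
  have "fst g ^ 2 + s * fst g * snd g + snd g ^ 2 = (d1^2 + s * d1 * d2 + d2^2) / t^2"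
    unfolding g1 g2 using tp by (simp add: field_simps power2_eq_square)
  also have "\<dots> \<le> r" using Q cl t2 by (simp add: divide_le_eq)
  finally show ?thesis .
qed

lemma key:
  fixes ca sa cb sb :: real
  assumes h1: "ca^2+sa^2=1" and h2: "cb^2+sb^2=1"
  shows "6*(((1+ca+cb)* sa - (sa+sb)*ca)^2 + ((1+ca+cb)* sa - (sa+sb)*ca)*((1+ca+cb)* sb - (sa+sb)*cb) + ((1+ca+cb)* sb - (sa+sb)*cb)^2)
     \<le> ((1+ca+cb)^2+(sa+sb)^2)*(9-((1+ca+cb)^2+(sa+sb)^2))
    \<and> (1+ca+cb)^2+(sa+sb)^2 \<le> 9"
proof -
  define X where "X = 1+ca+cb"
  define Y where "Y = sa+sb"
  define p where "p = X* sa - Y*ca"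
  define q where "q = X* sb - Y*cb"
  define F where "F = X^2+Y^2"
  define y0 where "y0 = X*ca + Y* sa"
  define w0 where "w0 = X*cb + Y* sb"
  have e1: "p^2 + y0^2 = F" unfolding p_def y0_def F_def
  proof -
    have "(X* sa - Y*ca)^2 + (X*ca + Y* sa)^2 = (X^2+Y^2)*(ca^2+sa^2)" by (simp add: algebra_simps power2_eq_square)
    then show "(X* sa - Y*ca)^2 + (X*ca + Y* sa)^2 = X^2+Y^2" using h1 by simp
  qed
  have e2: "q^2 + w0^2 = F" unfolding q_def w0_def F_def
  proof -
    have "(X* sb - Y*cb)^2 + (X*cb + Y* sb)^2 = (X^2+Y^2)*(cb^2+sb^2)" by (simp add: algebra_simps power2_eq_square)
    then show "(X* sb - Y*cb)^2 + (X*cb + Y* sb)^2 = X^2+Y^2" using h2 by simp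
  qed
  have e3: "X + y0 + w0 = F" unfolding X_def Y_def y0_def w0_def F_def
    by (simp add: algebra_simps power2_eq_square)
  have e4: "p + q = Y" unfolding p_def q_def X_def Y_def by (simp add: algebra_simps)
  have cs: "F^2 \<le> 3*(X^2+y0^2+w0^2)" unfolding e3[symmetric]
    using zero_le_power2[of "X-y0"] zero_le_power2[of "y0-w0"] zero_le_power2[of "X-w0"] by (simp add: power2_eq_square algebra_simps)
  have sum: "p^2+q^2+Y^2 + (X^2+y0^2+w0^2) = 3*F" using e1 e2 F_def by simp
  have Q: "6*(p^2+p*q+q^2) = 3*(p^2+q^2+Y^2)" using e4[symmetric] by (simp add: power2_eq_square algebra_simps)
  have A: "6*(p^2+p*q+q^2) \<le> F*(9-F)" using Q sum cs by (simp add: algebra_simps power2_eq_square)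
  have F0: "0 \<le> F" unfolding F_def by simp
  have S3: "X^2+y0^2+w0^2 \<le> 3*F" using sum zero_le_power2[of p] zero_le_power2[of q] zero_le_power2[of Y] by linarith
  have B: "F*F \<le> 9*F" using cs S3 by (simp add: power2_eq_square)
  have "F \<le> 9"
  proof (rule ccontr)
    assume "\<not> F \<le> 9"
    then have "9*F < F*F" by (simp add: mult_strict_right_mono)
    then show False using B by simp
  qed
  with A show ?thesis unfolding p_def q_def F_def X_def Y_def by simp
qed



lemma cmod_eq: "cmod (1 + cis a + cis b) = sqrt ((1+cos a+cos b)^2 + (sin a+sin b)^2)"
  by (simp add: cmod_def)

lemma dtri: fixes a b :: real shows "((\<lambda>k. (cos (fst k) + cos (snd k) + cos (fst k + snd k)) / 3) has_derivative
   (\<lambda>h. (-(sin a + sin (a+b))/3) * fst h + (-(sin b + sin (a+b))/3) * snd h)) (at (a,b))"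
  by (auto intro!: derivative_eq_intros simp: fun_eq_iff field_simps)

lemma dsq: fixes a b :: real assumes "0 < (1+cos a+cos b)^2 + (sin a+sin b)^2"
  shows "((\<lambda>k. sqrt ((1+cos (fst k)+cos (snd k))^2 + (sin (fst k)+sin (snd k))^2)) has_derivative
   (\<lambda>h. (- ((1+cos a+cos b) * sin a - (sin a+sin b) * cos a) / sqrt ((1+cos a+cos b)^2 + (sin a+sin b)^2)) * fst h
      + (- ((1+cos a+cos b) * sin b - (sin a+sin b) * cos b) / sqrt ((1+cos a+cos b)^2 + (sin a+sin b)^2)) * snd h)) (at (a,b))"
  using assms
  by (auto intro!: derivative_eq_intros simp: fun_eq_iff algebra_simps divide_simps)


lemma mbound: "0 \<le> cmod (1 + cis a + cis b) \<and> cmod (1 + cis a + cis b) \<le> 3"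
proof -
  have "(1+cos a+cos b)^2 + (sin a+sin b)^2 \<le> 9" using key[of "cos a" "sin a" "cos b" "sin b"] by simp
  then have "sqrt ((1+cos a+cos b)^2 + (sin a+sin b)^2) \<le> sqrt 9" by (rule real_sqrt_le_mono)
  then show ?thesis by (simp add: cmod_eq)
qed

lemma lin_affine:
  fixes f :: "real \<times> real \<Rightarrow> real"
  assumes "(f has_derivative (\<lambda>h. d1 * fst h + d2 * snd h)) (at k)"
  shows "((\<lambda>k. \<alpha> + \<beta> * f k) has_derivative (\<lambda>h. (\<beta> * d1) * fst h + (\<beta> * d2) * snd h)) (at k)"
proof -
  have "((\<lambda>k. \<alpha> + \<beta> * f k) has_derivative (\<lambda>h. 0 + \<beta> * (d1 * fst h + d2 * snd h))) (at k)"
    by (intro derivative_intros assms)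
  then show ?thesis by (simp add: algebra_simps)
qed

lemma tri_case:
  fixes c :: "real\<times>real \<Rightarrow> real"
  assumes D: "((\<lambda>k. arccos (c k)) has_derivative (\<lambda>h. fst g * fst h + snd g * snd h)) (at k)"
  and cdef: "c = (\<lambda>(k1,k2). (cos k1 + cos k2 + cos (k1 + k2)) / 3)"
  shows "fst g ^ 2 + (-1) * fst g * snd g + snd g ^ 2 \<le> 1/2"
proof -
  obtain a b where k: "k = (a,b)" by (cases k)
  have cf: "c = (\<lambda>k. (cos (fst k) + cos (snd k) + cos (fst k + snd k)) / 3)"
    unfolding cdef by (simp add: case_prod_unfold)
  have B: "-1 \<le> c y \<and> c y \<le> 1" for y unfolding cf
    using cos_le_one[of "fst y"] cos_le_one[of "snd y"] cos_le_one[of "fst y + snd y"]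
      cos_ge_minus_one[of "fst y"] cos_ge_minus_one[of "snd y"] cos_ge_minus_one[of "fst y + snd y"] by (auto simp del: cos_le_one cos_ge_minus_one)
  show ?thesis
  proof (cases "c k = 1 \<or> c k = -1")
    case True
    then have "(\<forall>y. c y \<le> c k) \<or> (\<forall>y. c k \<le> c y)" using B by auto
    then have "g = (0,0)" by (rule grad_zero[OF D B])
    then show ?thesis by simp
  next
    case False
    then have c1: "-1 < c k" "c k < 1" using B[of k] by auto
    have Dc: "(c has_derivative (\<lambda>h. (-(sin a + sin (a+b))/3) * fst h + (-(sin b + sin (a+b))/3) * snd h)) (at k)"
      unfolding k cf by (rule dtri)
    show ?thesis
    proof (rule grad_chain[OF D Dc c1])
      define pp where "pp = (1 + cos a + cos b) * sin a - (sin a + - sin b) * cos a"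
      define qq where "qq = (1 + cos a + cos b) * (- sin b) - (sin a + - sin b) * cos b"
      define F where "F = (1 + cos a + cos b)^2 + (sin a + - sin b)^2"
      have K: "6 * (pp^2 + pp*qq + qq^2) \<le> F * (9 - F)" "F \<le> 9"
        using key[of "cos a" "sin a" "cos b" "- sin b"] unfolding pp_def qq_def F_def by simp_all
      have F0: "0 \<le> F" unfolding F_def by simp
      have ep: "pp = sin a + sin (a+b)" unfolding pp_def by (simp add: sin_add algebra_simps)
      have eq: "qq = - (sin b + sin (a+b))" unfolding qq_def by (simp add: sin_add algebra_simps)
      have eF: "F = 3 + 6 * c k"
      proof -
        have "F = (cos a ^2 + sin a ^2) + (cos b^2 + sin b^2) + 1 + 2*cos a + 2*cos b + 2*(cos a * cos b - sin a * sin b)"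
          unfolding F_def by algebra
        also have "\<dots> = 3 + 6 * c k" unfolding cf k by (simp add: cos_add)
        finally show ?thesis .
      qed
      have ck: "c k = (F - 3) / 6" using eF by simp
      have aux: "(9-F)*(3+F) - 4/3*F*(9-F) = (9-F)^2/3" by (simp add: power2_eq_square field_simps)
      have "(-(sin a + sin (a+b))/3)^2 + (-1) * (-(sin a + sin (a+b))/3) * (-(sin b + sin (a+b))/3) + (-(sin b + sin (a+b))/3)^2
          = (pp^2 + pp*qq + qq^2) / 9" unfolding ep eq by (simp add: power2_eq_square field_simps)
      also have "\<dots> \<le> 1/2 * (1 - (c k)^2)" unfolding ck
        using K aux zero_le_power2[of "9-F"] by (simp add: power2_eq_square field_simps)
      finally show "(-(sin a + sin (a+b))/3)^2 + (-1) * (-(sin a + sin (a+b))/3) * (-(sin b + sin (a+b))/3) + (-(sin b + sin (a+b))/3)^2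
          \<le> 1/2 * (1 - (c k)^2)" .
    qed
  qed
qed

lemma hk_case:
  fixes c :: "real\<times>real \<Rightarrow> real"
  assumes D: "((\<lambda>k. arccos (c k)) has_derivative (\<lambda>h. fst g * fst h + snd g * snd h)) (at k)"
  and cdef: "c = (\<lambda>k. \<alpha> + \<beta> * cmod (1 + cis (fst k) + cis (snd k)))"
  and B: "\<And>y. -1 \<le> c y \<and> c y \<le> 1"
  and r0: "0 \<le> r"
  and ineq: "\<And>m. 0 < m \<Longrightarrow> m \<le> 3 \<Longrightarrow> \<beta>^2 * (9 - m^2) / 6 \<le> r * (1 - (\<alpha> + \<beta> * m)^2)"
  shows "fst g ^ 2 + 1 * fst g * snd g + snd g ^ 2 \<le> r"
proof -
  obtain a b where k: "k = (a,b)" by (cases k)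
  define m where "m = cmod (1 + cis a + cis b)"
  have ckm: "c k = \<alpha> + \<beta> * m" unfolding cdef k m_def by simp
  have mb: "0 \<le> m" "m \<le> 3" unfolding m_def using mbound by auto
  show ?thesis
  proof (cases "m = 0 \<or> c k = 1 \<or> c k = -1")
    case True
    have "(\<forall>y. c y \<le> c k) \<or> (\<forall>y. c k \<le> c y)"
    proof (cases "m = 0")
      case True
      then have "c k = \<alpha>" using ckm by simp
      moreover have "\<And>y. 0 \<le> cmod (1 + cis (fst y) + cis (snd y))" by simp
      ultimately show ?thesis unfolding cdef
        by (cases "0 \<le> \<beta>") (auto intro: mult_nonneg_nonneg mult_nonpos_nonneg)
    next
      case False
      then show ?thesis using True B by auto
    qed
    then have "g = (0,0)" by (rule grad_zero[OF D B])
    then show ?thesis using r0 by simp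
  next
    case False
    then have c1: "-1 < c k" "c k < 1" and mp: "0 < m" using B[of k] mb by auto
    define X where "X = 1 + cos a + cos b"
    define Y where "Y = sin a + sin b"
    define pp where "pp = X * sin a - Y * cos a"
    define qq where "qq = X * sin b - Y * cos b"
    define F where "F = X^2 + Y^2"
    have mF: "m = sqrt F" unfolding m_def F_def X_def Y_def by (simp add: cmod_eq)
    have F0: "0 < F" using mp mF by simp
    have m2: "m^2 = F" using mF F0 by simp
    have K: "6 * (pp^2 + pp*qq + qq^2) \<le> F * (9 - F)"
      using key[of "cos a" "sin a" "cos b" "sin b"] unfolding pp_def qq_def F_def X_def Y_def by simp_all
    have Dm: "((\<lambda>k. cmod (1 + cis (fst k) + cis (snd k))) has_derivative (\<lambda>h. (- pp / m) * fst h + (- qq / m) * snd h)) (at k)"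
      unfolding k cmod_eq mF pp_def qq_def F_def X_def Y_def using F0[unfolded F_def X_def Y_def] by (rule dsq)
    have Dc: "(c has_derivative (\<lambda>h. (\<beta> * (- pp / m)) * fst h + (\<beta> * (- qq / m)) * snd h)) (at k)"
      unfolding cdef by (rule lin_affine[OF Dm])
    show ?thesis
    proof (rule grad_chain[OF D Dc c1])
      have "(\<beta> * (- pp / m))^2 + 1 * (\<beta> * (- pp / m)) * (\<beta> * (- qq / m)) + (\<beta> * (- qq / m))^2
          = \<beta>^2 * (pp^2 + pp*qq + qq^2) / m^2" using mp by (simp add: power2_eq_square field_simps)
      also have "\<dots> \<le> \<beta>^2 * (F * (9 - F) / 6) / m^2"
        using K mp by (intro divide_right_mono mult_left_mono) auto
      also have "\<dots> = \<beta>^2 * (9 - m^2) / 6" using F0 m2 by (simp add: field_simps)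
      also have "\<dots> \<le> r * (1 - (c k)^2)" using ineq[OF mp mb(2)] ckm by simp
      finally show "(\<beta> * (- pp / m))^2 + 1 * (\<beta> * (- pp / m)) * (\<beta> * (- qq / m)) + (\<beta> * (- qq / m))^2 \<le> r * (1 - (c k)^2)" .
    qed
  qed
qed


lemma cmod_fun: "(\<lambda>(k1,k2). f (cmod (1 + cis k1 + cis k2))) = (\<lambda>k. f (cmod (1 + cis (fst k) + cis (snd k))))"
  by (simp add: case_prod_unfold)

lemma hexp:
  assumes D: "((\<lambda>k. arccos (c k)) has_derivative (\<lambda>h. fst g * fst h + snd g * snd h)) (at k)"
  and cdef: "c = (\<lambda>(k1,k2). cmod (1 + cis k1 + cis k2) / 3)"
  shows "fst g ^ 2 + 1 * fst g * snd g + snd g ^ 2 \<le> 1/6"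
proof (rule hk_case[OF D, of 0 "1/3"])
  show "c = (\<lambda>k. 0 + 1/3 * cmod (1 + cis (fst k) + cis (snd k)))"
    unfolding cdef by (auto simp: fun_eq_iff)
  then show "-1 \<le> c y \<and> c y \<le> 1" for y using mbound[of "fst y" "snd y"] norm_ge_zero[of "1 + cis (fst y) + cis (snd y)"] by (auto simp del: norm_ge_zero)
  show "(1/3)^2 * (9 - m^2) / 6 \<le> 1/6 * (1 - (0 + 1/3 * m)^2)" for m :: real
    by (simp add: power2_eq_square field_simps)
qed simp

lemma hexm:
  assumes D: "((\<lambda>k. arccos (c k)) has_derivative (\<lambda>h. fst g * fst h + snd g * snd h)) (at k)"
  and cdef: "c = (\<lambda>(k1,k2). - (cmod (1 + cis k1 + cis k2) / 3))"
  shows "fst g ^ 2 + 1 * fst g * snd g + snd g ^ 2 \<le> 1/6"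
proof (rule hk_case[OF D, of 0 "-1/3"])
  show "c = (\<lambda>k. 0 + -1/3 * cmod (1 + cis (fst k) + cis (snd k)))"
    unfolding cdef by (auto simp: fun_eq_iff)
  then show "-1 \<le> c y \<and> c y \<le> 1" for y using mbound[of "fst y" "snd y"] norm_ge_zero[of "1 + cis (fst y) + cis (snd y)"] by (auto simp del: norm_ge_zero)
  show "(-1/3)^2 * (9 - m^2) / 6 \<le> 1/6 * (1 - (0 + -1/3 * m)^2)" for m :: real
    by (simp add: power2_eq_square field_simps)
qed simp

lemma kagp:
  assumes D: "((\<lambda>k. arccos (c k)) has_derivative (\<lambda>h. fst g * fst h + snd g * snd h)) (at k)"
  and cdef: "c = (\<lambda>(k1,k2). (1 + cmod (1 + cis k1 + cis k2)) / 4)"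
  shows "fst g ^ 2 + 1 * fst g * snd g + snd g ^ 2 \<le> 1/4"
proof (rule hk_case[OF D, of "1/4" "1/4"])
  show "c = (\<lambda>k. 1/4 + 1/4 * cmod (1 + cis (fst k) + cis (snd k)))"
    unfolding cdef by (auto simp: fun_eq_iff)
  then show "-1 \<le> c y \<and> c y \<le> 1" for y using mbound[of "fst y" "snd y"] norm_ge_zero[of "1 + cis (fst y) + cis (snd y)"] by (auto simp del: norm_ge_zero)
  show "(1/4)^2 * (9 - m^2) / 6 \<le> 1/4 * (1 - (1/4 + 1/4 * m)^2)" if "0 < m" "m \<le> 3" for m :: real
  proof -
    have "0 \<le> (3 - m) * (9 + m)" using that by (intro mult_nonneg_nonneg) auto
    then show ?thesis by (simp add: power2_eq_square field_simps)
  qed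
qed simp

lemma kagm:
  assumes D: "((\<lambda>k. arccos (c k)) has_derivative (\<lambda>h. fst g * fst h + snd g * snd h)) (at k)"
  and cdef: "c = (\<lambda>(k1,k2). (1 - cmod (1 + cis k1 + cis k2)) / 4)"
  shows "fst g ^ 2 + 1 * fst g * snd g + snd g ^ 2 \<le> 1/4"
proof (rule hk_case[OF D, of "1/4" "-1/4"])
  show "c = (\<lambda>k. 1/4 + -1/4 * cmod (1 + cis (fst k) + cis (snd k)))"
    unfolding cdef by (auto simp: fun_eq_iff field_simps)
  then show "-1 \<le> c y \<and> c y \<le> 1" for y using mbound[of "fst y" "snd y"] norm_ge_zero[of "1 + cis (fst y) + cis (snd y)"] by (auto simp del: norm_ge_zero)
  show "(-1/4)^2 * (9 - m^2) / 6 \<le> 1/4 * (1 - (1/4 + -1/4 * m)^2)" if "0 < m" "m \<le> 3" for m :: real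
  proof -
    have "0 \<le> (9 - m) * (3 + m)" using that by (intro mult_nonneg_nonneg) auto
    then show ?thesis by (simp add: power2_eq_square field_simps)
  qed
qed simp

lemma kagc:
  assumes D: "((\<lambda>k. arccos (c k)) has_derivative (\<lambda>h. fst g * fst h + snd g * snd h)) (at k)"
  and cdef: "c = (\<lambda>_. - 1 / 2)"
  shows "fst g ^ 2 + 1 * fst g * snd g + snd g ^ 2 \<le> 1/4"
proof -
  have "g = (0,0)" by (rule grad_zero[OF D]) (auto simp: cdef)
  then show ?thesis by simp
qed

theorem theorem4:
  fixes G :: lattice
  shows "orbit G \<subseteq> {(x, y). x ^ 2 + s_param G * x * y + y ^ 2 \<le> r_param G}"
proof
  fix g assume "g \<in> orbit G"
  then obtain c k1 k2 where cB: "c \<in> eig_branches G"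
    and D: "((\<lambda>k. arccos (c k)) has_derivative (\<lambda>h. fst g * fst h + snd g * snd h)) (at (k1, k2))"
    unfolding orbit_def by blast
  have "fst g ^ 2 + s_param G * fst g * snd g + snd g ^ 2 \<le> r_param G"
  proof (cases G)
    case Triangular
    then show ?thesis using tri_case[OF D] cB by simp
  next
    case Hexagonal
    then show ?thesis using hexp[OF D] hexm[OF D] cB by auto
  next
    case Kagome
    then show ?thesis using kagp[OF D] kagm[OF D] kagc[OF D] cB by auto
  qed
  then show "g \<in> {(x, y). x ^ 2 + s_param G * x * y + y ^ 2 \<le> r_param G}" by (cases g) simp
qed

end
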